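(* Let $J\subseteq\mathbb{R}$ be an interval, $f:J\to\mathbb{R}$ convex, $a,b\in J$, and $\nu\in[0,1]$. Put $r=\min\{\nu,1-\nu\}$, $R=\max\{\nu,1-\nu\}$ and $$\Phi_f(\nu):=\int_0^1\left(\frac{f\big(a\nabla_{\nu\lambda}b\big)+f\big(b\nabla_{(1-\nu)\lambda}a\big)}{2}-f\Big(a\nabla_{\frac{1+\lambda(2\nu-1)}{2}}b\Big)\right)d\lambda .$$ Then $$2r\,\Phi_f(\nu)\le \mathfrak C_{f,\nu}(a,b)-f\big(a\nabla_\nu b\big)\le 2R\,\Phi_f(\nu).$$
   Context: For real $x,y$ and $\mu\in[0,1]$, $x\nabla_\mu y:=(1-\mu)x+\mu y$. For $f$ convex on an interval containing $a,b$ and $\nu\in[0,1]$, $$\mathfrak C_{f,\nu}(a,b):=(1-\nu)\int_0^1 f\big(a\nabla_{\nu\lambda}b\big)\,d\lambda+\nu\int_0^1 f\big(b\nabla_{(1-\nu)\lambda}a\big)\,d\lambda .$$ *)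

theory Defs
  imports "HOL-Analysis.Analysis"
begin

text \<open>Weighted arithmetic mean: x nabla_mu y = (1 - mu) x + mu y.\<close>
definition wam :: "real \<Rightarrow> real \<Rightarrow> real \<Rightarrow> real" where
  "wam x \<mu> y = (1 - \<mu>) * x + \<mu> * y"

definition Cfrak :: "(real \<Rightarrow> real) \<Rightarrow> real \<Rightarrow> real \<Rightarrow> real \<Rightarrow> real" where
  "Cfrak f \<nu> a b =
     (1 - \<nu>) * integral {0..1} (\<lambda>t. f (wam a (\<nu> * t) b))
     + \<nu> * integral {0..1} (\<lambda>t. f (wam b ((1 - \<nu>) * t) a))"

definition Phi :: "(real \<Rightarrow> real) \<Rightarrow> real \<Rightarrow> real \<Rightarrow> real \<Rightarrow> real" where
  "Phi f \<nu> a b = integral {0..1} (\<lambda>t.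
      (f (wam a (\<nu> * t) b) + f (wam b ((1 - \<nu>) * t) a)) / 2
      - f (wam a ((1 + t * (2 * \<nu> - 1)) / 2) b))"

end

theory Submission
  imports Defs
begin

lemma seg_in:
  fixes J :: "real set"
  assumes "is_interval J" "c \<in> J" "d \<in> J" "0 \<le> t" "t \<le> 1"
  shows "(1 - t) * c + t * d \<in> J"
proof -
  have "convex J" using assms(1) by (simp add: is_interval_convex)
  from convexD[OF this assms(2,3), of "1-t" t] assms(4,5) show ?thesis by simp
qed

lemma conv_comp:
  fixes J :: "real set" and f :: "real \<Rightarrow> real"
  assumes "is_interval J" "convex_on J f" "c \<in> J" "d \<in> J"
  shows "convex_on {0..1} (\<lambda>t. f ((1 - t) * c + t * d))"
proof (rule convex_onI)
  show "convex {0..1::real}" by simp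
  fix t x y :: real assume t: "0 < t" "t < 1" and x: "x \<in> {0..1}" and y: "y \<in> {0..1}"
  have P: "(1 - x) * c + x * d \<in> J" and Q: "(1 - y) * c + y * d \<in> J"
    using seg_in[OF assms(1,3,4)] x y by auto
  have eq: "(1 - ((1 - t) *\<^sub>R x + t *\<^sub>R y)) * c + ((1 - t) *\<^sub>R x + t *\<^sub>R y) * d
     = (1 - t) *\<^sub>R ((1 - x) * c + x * d) + t *\<^sub>R ((1 - y) * c + y * d)"
    by (simp add: algebra_simps)
  show "f ((1 - ((1 - t) *\<^sub>R x + t *\<^sub>R y)) * c + ((1 - t) *\<^sub>R x + t *\<^sub>R y) * d)
         \<le> (1 - t) * f ((1 - x) * c + x * d) + t * f ((1 - y) * c + y * d)"
    unfolding eq using convex_onD[OF assms(2), of t] t P Q by simp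
qed

lemma conv_int:
  fixes h :: "real \<Rightarrow> real"
  assumes h: "convex_on {0..1} h" shows "h integrable_on {0..1}"
proof -
  have cont: "continuous_on {0<..<1} h"
    by (rule convex_on_continuous) (auto intro: convex_on_subset[OF h])
  define M where "M = 2 * \<bar>h (1/2)\<bar> + \<bar>h 0\<bar> + \<bar>h 1\<bar>"
  have up: "h t \<le> \<bar>h 0\<bar> + \<bar>h 1\<bar>" if "t \<in> {0..1}" for t
  proof -
    have "h ((1 - t) *\<^sub>R 0 + t *\<^sub>R 1) \<le> (1 - t) * h 0 + t * h 1"
      using convex_onD[OF h, of t 0 1] that by simp
    moreover have "(1 - t) * h 0 \<le> \<bar>h 0\<bar>"
    proof -
      have "(1 - t) * h 0 \<le> (1 - t) * \<bar>h 0\<bar>" using that by (intro mult_left_mono) auto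
      also have "\<dots> \<le> \<bar>h 0\<bar>" using that by (intro mult_left_le_one_le) auto
      finally show ?thesis .
    qed
    moreover have "t * h 1 \<le> \<bar>h 1\<bar>"
    proof -
      have "t * h 1 \<le> t * \<bar>h 1\<bar>" using that by (intro mult_left_mono) auto
      also have "\<dots> \<le> \<bar>h 1\<bar>" using that by (intro mult_left_le_one_le) auto
      finally show ?thesis .
    qed
    ultimately show ?thesis by simp
  qed
  have bd: "\<bar>h t\<bar> \<le> M" if "t \<in> {0..1}" for t
  proof -
    have c: "h ((1 - 1/2) *\<^sub>R t + (1/2) *\<^sub>R (1 - t)) \<le> (1 - 1/2) * h t + (1/2) * h (1 - t)"
      using convex_onD[OF h, of "1/2" t "1-t"] that by simp
    have e: "(1 - 1/2) *\<^sub>R t + (1/2) *\<^sub>R (1 - t) = (1/2::real)" by (simp add: field_simps)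
    from c have "h (1/2) \<le> h t / 2 + h (1 - t) / 2" unfolding e by simp
    moreover have "h (1 - t) \<le> \<bar>h 0\<bar> + \<bar>h 1\<bar>" using up[of "1-t"] that by simp
    ultimately show ?thesis using up[OF that] unfolding M_def by linarith
  qed
  have "h integrable_on {0<..<1}"
  proof (rule measurable_bounded_by_integrable_imp_integrable_real)
    show "h \<in> borel_measurable (lebesgue_on {0<..<1})"
      by (rule continuous_imp_measurable_on_sets_lebesgue[OF cont]) simp
    show "(\<lambda>x. M) integrable_on {0<..<1::real}"
      using integrable_on_Icc_iff_Ioo integrable_const_ivl by blast
    show "\<And>x. x \<in> {0<..<1} \<Longrightarrow> \<bar>h x\<bar> \<le> M" using bd by auto
  qed simp
  then show ?thesis using integrable_on_Icc_iff_Ioo by blast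
qed

lemma lin_aux:
  fixes A B M Z \<nu> :: real
  assumes "Z \<le> (1 - 2*\<nu>) * A + (2*\<nu>) * M" "2 * (1 - \<nu>) * M \<le> (1 - 2 * \<nu>) * B + Z"
  shows "2 * \<nu> * ((A + B) / 2 - M) \<le> (1 - \<nu>) * A + \<nu> * B - Z
    \<and> (1 - \<nu>) * A + \<nu> * B - Z \<le> 2 * (1 - \<nu>) * ((A + B) / 2 - M)"
  using assms by (simp add: field_simps)

lemma jensen_ref:
  fixes J :: "real set" and f :: "real \<Rightarrow> real"
  assumes "is_interval J" "convex_on J f" "x \<in> J" "y \<in> J" "0 \<le> \<nu>" "\<nu> \<le> 1/2"
  shows "2 * \<nu> * ((f x + f y) / 2 - f ((x + y) / 2)) \<le> (1 - \<nu>) * f x + \<nu> * f y - f ((1 - \<nu>) * x + \<nu> * y)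
    \<and> (1 - \<nu>) * f x + \<nu> * f y - f ((1 - \<nu>) * x + \<nu> * y) \<le> 2 * (1 - \<nu>) * ((f x + f y) / 2 - f ((x + y) / 2))"
proof -
  have m: "(x + y) / 2 \<in> J" using seg_in[OF assms(1,3,4), of "1/2"] by (simp add: add_divide_distrib)
  have z: "(1 - \<nu>) * x + \<nu> * y \<in> J" using seg_in[OF assms(1,3,4), of \<nu>] assms by simp
  have "f ((1 - 2*\<nu>) *\<^sub>R x + (2*\<nu>) *\<^sub>R ((x + y) / 2)) \<le> (1 - 2*\<nu>) * f x + (2*\<nu>) * f ((x + y) / 2)"
    using convex_onD[OF assms(2), of "2*\<nu>" x "(x+y)/2"] assms m by simp
  moreover have "(1 - 2*\<nu>) *\<^sub>R x + (2*\<nu>) *\<^sub>R ((x + y) / 2) = (1 - \<nu>) * x + \<nu> * y"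
    by (simp add: algebra_simps)
  ultimately have L: "f ((1 - \<nu>) * x + \<nu> * y) \<le> (1 - 2*\<nu>) * f x + (2*\<nu>) * f ((x + y) / 2)" by simp
  define \<alpha> where "\<alpha> = 1 / (2 * (1 - \<nu>))"
  have a0: "0 \<le> \<alpha>" "\<alpha> \<le> 1" using assms unfolding \<alpha>_def by (auto simp: field_simps)
  have c: "f ((1 - \<alpha>) *\<^sub>R y + \<alpha> *\<^sub>R ((1 - \<nu>) * x + \<nu> * y)) \<le> (1 - \<alpha>) * f y + \<alpha> * f ((1 - \<nu>) * x + \<nu> * y)"
    using convex_onD[OF assms(2), of \<alpha> y] a0 z assms by simp
  have eqm: "(1 - \<alpha>) *\<^sub>R y + \<alpha> *\<^sub>R ((1 - \<nu>) * x + \<nu> * y) = (x + y) / 2"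
  proof -
    have ha: "\<alpha> * (1 - \<nu>) = 1/2" using assms unfolding \<alpha>_def by simp
    have "(1 - \<alpha>) *\<^sub>R y + \<alpha> *\<^sub>R ((1 - \<nu>) * x + \<nu> * y) = y - (\<alpha> * (1 - \<nu>)) * y + (\<alpha> * (1 - \<nu>)) * x"
      by (simp add: algebra_simps)
    then show ?thesis unfolding ha by simp
  qed
  have U: "f ((x + y) / 2) \<le> (1 - \<alpha>) * f y + \<alpha> * f ((1 - \<nu>) * x + \<nu> * y)" using c unfolding eqm .
  have U2: "2 * (1 - \<nu>) * f ((x + y) / 2) \<le> (1 - 2 * \<nu>) * f y + f ((1 - \<nu>) * x + \<nu> * y)"
  proof -
    have "2 * (1 - \<nu>) * f ((x + y) / 2) \<le> 2 * (1 - \<nu>) * ((1 - \<alpha>) * f y + \<alpha> * f ((1 - \<nu>) * x + \<nu> * y))"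
      using U assms by (intro mult_left_mono) auto
    also have "\<dots> = 2 * (1 - \<nu>) * f y - 2 * (\<alpha> * (1 - \<nu>)) * f y + 2 * (\<alpha> * (1 - \<nu>)) * f ((1 - \<nu>) * x + \<nu> * y)"
      by (simp add: algebra_simps)
    also have "\<dots> = (1 - 2 * \<nu>) * f y + f ((1 - \<nu>) * x + \<nu> * y)"
      using assms unfolding \<alpha>_def by (simp add: algebra_simps)
    finally show ?thesis .
  qed
  have L': "f ((1 - \<nu>) * x + \<nu> * y) \<le> (1 - 2*\<nu>) * f x + (2*\<nu>) * f ((x + y) / 2)" using L .
  show ?thesis by (rule lin_aux[OF L' U2])
qed

lemma jensen_full:
  fixes J :: "real set" and f :: "real \<Rightarrow> real"
  assumes "is_interval J" "convex_on J f" "x \<in> J" "y \<in> J" "0 \<le> \<nu>" "\<nu> \<le> 1"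
  shows "2 * min \<nu> (1 - \<nu>) * ((f x + f y) / 2 - f ((x + y) / 2)) \<le> (1 - \<nu>) * f x + \<nu> * f y - f ((1 - \<nu>) * x + \<nu> * y)
    \<and> (1 - \<nu>) * f x + \<nu> * f y - f ((1 - \<nu>) * x + \<nu> * y) \<le> 2 * max \<nu> (1 - \<nu>) * ((f x + f y) / 2 - f ((x + y) / 2))"
proof (cases "\<nu> \<le> 1/2")
  case True
  then show ?thesis using jensen_ref[OF assms(1-4), of \<nu>] assms by (simp add: min_def max_def)
next
  case False
  have X: "2*(1-\<nu>)*((f y + f x)/2 - f((y+x)/2)) \<le> (1 - (1 - \<nu>)) * f y + (1-\<nu>)*f x - f((1 - (1 - \<nu>))*y + (1-\<nu>)*x)
    \<and> (1 - (1 - \<nu>)) * f y + (1-\<nu>)*f x - f((1 - (1 - \<nu>))*y + (1-\<nu>)*x) \<le> 2*(1 - (1-\<nu>))*((f y + f x)/2 - f((y+x)/2))"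
    by (rule jensen_ref[OF assms(1) assms(2) assms(4) assms(3)]) (use False assms in auto)
  have e: "1 - (1 - \<nu>) = \<nu>" "\<nu>*y + (1-\<nu>)*x = (1-\<nu>)*x+\<nu>*y" "y+x = x+y" "f y + f x = f x + f y" by simp_all
  have m: "min \<nu> (1 - \<nu>) = 1 - \<nu>" "max \<nu> (1 - \<nu>) = \<nu>" using False by auto
  from X show ?thesis unfolding e m by linarith
qed


lemma cm_int: "(g::real\<Rightarrow>real) integrable_on S \<Longrightarrow> (\<lambda>x. k * g x) integrable_on S"
  using integrable_on_cmult_left[of g S k] by simp

theorem theorem2p11:
  fixes J :: "real set" and f :: "real \<Rightarrow> real" and a b \<nu> :: real
  assumes "is_interval J"
    and "convex_on J f"
    and "a \<in> J" and "b \<in> J"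
    and "0 \<le> \<nu>" and "\<nu> \<le> 1"
  shows "2 * min \<nu> (1 - \<nu>) * Phi f \<nu> a b \<le> Cfrak f \<nu> a b - f (wam a \<nu> b)
       \<and> Cfrak f \<nu> a b - f (wam a \<nu> b) \<le> 2 * max \<nu> (1 - \<nu>) * Phi f \<nu> a b"
proof -
  define h1 where "h1 = (\<lambda>t. f (wam a (\<nu> * t) b))"
  define h2 where "h2 = (\<lambda>t. f (wam b ((1 - \<nu>) * t) a))"
  define h3 where "h3 = (\<lambda>t. f (wam a ((1 + t * (2 * \<nu> - 1)) / 2) b))"
  define c where "c = f (wam a \<nu> b)"
  define r where "r = min \<nu> (1 - \<nu>)"
  define R where "R = max \<nu> (1 - \<nu>)"
  have w1: "wam a \<nu> b \<in> J" unfolding wam_def using seg_in[OF assms(1,3,4)] assms by simp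
  have w2: "wam b (1 - \<nu>) a \<in> J" unfolding wam_def using seg_in[OF assms(1,4,3), of "1 - \<nu>"] assms by simp
  have w3: "(a + b) / 2 \<in> J" using seg_in[OF assms(1,3,4), of "1/2"] by (simp add: add_divide_distrib)
  have "h1 = (\<lambda>t. f ((1 - t) * a + t * wam a \<nu> b))"
    unfolding h1_def wam_def by (rule ext) (simp add: algebra_simps)
  then have i1: "h1 integrable_on {0..1}" using conv_int[OF conv_comp[OF assms(1,2,3) w1]] by simp
  have "h2 = (\<lambda>t. f ((1 - t) * b + t * wam b (1 - \<nu>) a))"
    unfolding h2_def wam_def by (rule ext) (simp add: algebra_simps)
  then have i2: "h2 integrable_on {0..1}" using conv_int[OF conv_comp[OF assms(1,2,4) w2]] by simp
  have "h3 = (\<lambda>t. f ((1 - t) * ((a + b) / 2) + t * wam a \<nu> b))"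
    unfolding h3_def wam_def by (rule ext, rule arg_cong[where f=f]) (simp add: field_simps)
  then have i3: "h3 integrable_on {0..1}" using conv_int[OF conv_comp[OF assms(1,2) w3 w1]] by simp
  have pw: "2 * r * ((h1 t + h2 t) / 2 - h3 t) \<le> (1 - \<nu>) * h1 t + \<nu> * h2 t - c
      \<and> (1 - \<nu>) * h1 t + \<nu> * h2 t - c \<le> 2 * R * ((h1 t + h2 t) / 2 - h3 t)"
    if t: "t \<in> {0..1}" for t
  proof -
    define P where "P = wam a (\<nu> * t) b"
    define Q where "Q = wam b ((1 - \<nu>) * t) a"
    have P: "P \<in> J" unfolding P_def wam_def using seg_in[OF assms(1,3,4), of "\<nu> * t"] assms t
      by (simp add: mult_le_one)
    have Q: "Q \<in> J" unfolding Q_def wam_def using seg_in[OF assms(1,4,3), of "(1 - \<nu>) * t"] assms t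
      by (simp add: mult_le_one)
    have e1: "(1 - \<nu>) * P + \<nu> * Q = wam a \<nu> b"
      unfolding P_def Q_def wam_def by (simp add: algebra_simps)
    have e2: "(P + Q) / 2 = wam a ((1 + t * (2 * \<nu> - 1)) / 2) b"
      unfolding P_def Q_def wam_def by (simp add: field_simps)
    note X = jensen_full[OF assms(1,2) P Q assms(5,6), unfolded e1 e2]
    show ?thesis using X
      unfolding r_def R_def c_def h1_def h2_def h3_def P_def Q_def by simp
  qed
  have i12: "(\<lambda>t. h1 t + h2 t) integrable_on {0..1}" by (rule integrable_add[OF i1 i2])
  have iG: "(\<lambda>t. (h1 t + h2 t) / 2 - h3 t) integrable_on {0..1}"
    by (rule integrable_diff[OF integrable_on_divide[OF i12] i3])
  have iD0: "(\<lambda>t. (1 - \<nu>) * h1 t + \<nu> * h2 t) integrable_on {0..1}"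
    by (rule integrable_add[OF cm_int[OF i1] cm_int[OF i2]])
  have iD: "(\<lambda>t. (1 - \<nu>) * h1 t + \<nu> * h2 t - c) integrable_on {0..1}"
    by (rule integrable_diff[OF iD0 Henstock_Kurzweil_Integration.integrable_const_ivl])
  have Phi_eq: "Phi f \<nu> a b = integral {0..1} (\<lambda>t. (h1 t + h2 t) / 2 - h3 t)"
    unfolding Phi_def h1_def h2_def h3_def by simp
  have D_eq: "Cfrak f \<nu> a b - f (wam a \<nu> b) = integral {0..1} (\<lambda>t. (1 - \<nu>) * h1 t + \<nu> * h2 t - c)"
  proof -
    have "integral {0..1} (\<lambda>t. (1 - \<nu>) * h1 t + \<nu> * h2 t - c)
        = integral {0..1} (\<lambda>t. (1 - \<nu>) * h1 t + \<nu> * h2 t) - c"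
      using Henstock_Kurzweil_Integration.integral_diff[OF iD0 Henstock_Kurzweil_Integration.integrable_const_ivl[of c 0 1]] by simp
    also have "integral {0..1} (\<lambda>t. (1 - \<nu>) * h1 t + \<nu> * h2 t)
        = integral {0..1} (\<lambda>t. (1 - \<nu>) * h1 t) + integral {0..1} (\<lambda>t. \<nu> * h2 t)"
      by (rule Henstock_Kurzweil_Integration.integral_add[OF cm_int[OF i1] cm_int[OF i2]])
    finally show ?thesis unfolding Cfrak_def c_def h1_def h2_def by simp
  qed
  have L: "integral {0..1} (\<lambda>t. 2 * r * ((h1 t + h2 t) / 2 - h3 t)) \<le> integral {0..1} (\<lambda>t. (1 - \<nu>) * h1 t + \<nu> * h2 t - c)"
    by (rule integral_le) (use cm_int[OF iG] iD pw in auto)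
  have U: "integral {0..1} (\<lambda>t. (1 - \<nu>) * h1 t + \<nu> * h2 t - c) \<le> integral {0..1} (\<lambda>t. 2 * R * ((h1 t + h2 t) / 2 - h3 t))"
    by (rule integral_le) (use cm_int[OF iG] iD pw in auto)
  show ?thesis using L U unfolding Phi_eq D_eq r_def R_def by simp
qed

end
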